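(* For every positive integer $m$ and every complex number $\alpha \neq 0$, $$\sum_{k=1}^m \frac{k^\alpha}{m-k+1} = \sum_{j=1}^m j!\, S(\alpha, j) \binom{m+1}{j} \left(H_{m+1} - H_j\right).$$
   Context: For a complex number $\alpha \neq 0$ and a positive integer $k$, the Stirling function of the second kind is $$S(\alpha, k) = \frac{1}{k!} \sum_{j=1}^k (-1)^{k-j} \binom{k}{j} j^\alpha,$$ where for a positive integer $j$, $j^\alpha = e^{\alpha \ln j}$ with $\ln j$ the real logarithm. $H_k = 1 + \frac12 + \cdots + \frac1k$ denotes the $k$-th harmonic number. *)

theory Defs
  imports "HOL-Analysis.Analysis"
begin

definition cpow_nat :: "nat \<Rightarrow> complex \<Rightarrow> complex" where
  "cpow_nat j \<alpha> = exp (\<alpha> * complex_of_real (ln (real j)))"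

definition stirling_fun :: "complex \<Rightarrow> nat \<Rightarrow> complex" where
  "stirling_fun \<alpha> k = (1 / of_nat (fact k)) *
     (\<Sum>j=1..k. (-1) ^ (k - j) * of_nat (k choose j) * cpow_nat j \<alpha>)"

end

theory Submission
  imports Defs
begin

lemma altB:
  fixes a :: "nat \<Rightarrow> complex"
  shows "(\<Sum>t\<le>Suc n. (-1)^t * of_nat (Suc n choose t) * a t) =
         (\<Sum>t\<le>n. (-1)^t * of_nat (n choose t) * a t) - (\<Sum>t\<le>n. (-1)^t * of_nat (n choose t) * a (Suc t))"
proof -
  have "(\<Sum>t\<le>Suc n. (-1)^t * of_nat (Suc n choose t) * a t) =
        a 0 + (\<Sum>t\<le>n. (-1)^(Suc t) * of_nat (Suc n choose Suc t) * a (Suc t))"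
    by (subst sum.atMost_Suc_shift) simp
  also have "\<dots> = a 0 + (\<Sum>t\<le>n. (-1)^(Suc t) * of_nat (n choose Suc t) * a (Suc t))
                 - (\<Sum>t\<le>n. (-1)^t * of_nat (n choose t) * a (Suc t))"
    by (simp add: sum.distrib sum_subtractf algebra_simps sum_negf)
  also have "a 0 + (\<Sum>t\<le>n. (-1)^(Suc t) * of_nat (n choose Suc t) * a (Suc t))
             = (\<Sum>t\<le>Suc n. (-1)^t * of_nat (n choose t) * a t)"
    by (subst sum.atMost_Suc_shift) simp
  also have "\<dots> = (\<Sum>t\<le>n. (-1)^t * of_nat (n choose t) * a t)"
    by simp
  finally show ?thesis .
qed

lemma altA:
  "(\<Sum>t\<le>Suc k. (-1)^t * of_nat (Suc k choose t) * harm (i+t) :: complex)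
     = - (fact i * fact k / fact (i + Suc k))"
proof (induction k arbitrary: i)
  case 0
  have "fact i \<noteq> (0::complex)" by simp
  moreover have "(1 + of_nat i :: complex) \<noteq> 0"
    by (metis of_nat_Suc of_nat_eq_0_iff nat.simps(3))
  moreover have "fact i + fact i * of_nat i = (fact i :: complex) * (1 + of_nat i)"
    by (simp add: algebra_simps)
  ultimately show ?case by (simp add: harm_Suc field_simps del: of_nat_Suc)
next
  case (Suc k)
  have e0: "(\<Sum>t\<le>Suc (Suc k). (-1)^t * of_nat (Suc (Suc k) choose t) * harm (i+t) :: complex)
     = (\<Sum>t\<le>Suc k. (-1)^t * of_nat (Suc k choose t) * harm (i+t))
       - (\<Sum>t\<le>Suc k. (-1)^t * of_nat (Suc k choose t) * harm (Suc i+t))"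
    using altB[of "Suc k" "\<lambda>t. harm (i+t)"] by simp
  have e: "(\<Sum>t\<le>Suc (Suc k). (-1)^t * of_nat (Suc (Suc k) choose t) * harm (i+t) :: complex)
     = - (fact i * fact k / fact (i + Suc k)) + (fact (Suc i) * fact k / fact (Suc i + Suc k))"
    unfolding e0 Suc.IH by simp
  define x :: complex where "x = of_nat i"
  define y :: complex where "y = of_nat k"
  define F :: complex where "F = fact (i + k)"
  define A :: complex where "A = fact i * fact k"
  have F0: "F \<noteq> 0" unfolding F_def by simp
  have n1: "x + y + 1 \<noteq> 0" unfolding x_def y_def
    by (metis of_nat_Suc of_nat_add of_nat_eq_0_iff nat.simps(3) add.commute)
  have n2: "x + y + 2 \<noteq> 0"
  proof -
    have "(of_nat i + of_nat k + 2 :: complex) = of_nat (i + k + 2)" by simp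
    also have "\<dots> \<noteq> 0" by (simp only: of_nat_eq_0_iff)
    finally show ?thesis unfolding x_def y_def .
  qed
  have alg: "- (A / ((x+y+1)*F)) + (x+1)*A/((x+y+2)*((x+y+1)*F)) = -(A*(y+1)/((x+y+2)*((x+y+1)*F)))"
  proof -
    have "A / ((x+y+1)*F) = A*(x+y+2)/((x+y+2)*((x+y+1)*F))" using n2 by simp
    then have "- (A / ((x+y+1)*F)) + (x+1)*A/((x+y+2)*((x+y+1)*F))
       = (-(A*(x+y+2)) + (x+1)*A)/((x+y+2)*((x+y+1)*F))"
      by (simp only: minus_divide_left add_divide_distrib)
    also have "-(A*(x+y+2)) + (x+1)*A = -(A*(y+1))" by (simp add: algebra_simps)
    finally show ?thesis by simp
  qed
  have f1: "fact (i + Suc k) = (x+y+1) * F"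
    unfolding x_def y_def F_def by (simp add: algebra_simps)
  have f2: "fact (Suc i + Suc k) = (x+y+2) * ((x+y+1) * F)"
    unfolding x_def y_def F_def
    by (simp add: algebra_simps del: fact_Suc) (simp add: fact_Suc algebra_simps)
  have f3: "fact (Suc i) * fact k = (x+1) * (A::complex)"
    unfolding x_def A_def by (simp add: algebra_simps)
  have f4: "fact i * fact (Suc k) = A * (y+1::complex)"
    unfolding y_def A_def by (simp add: algebra_simps)
  have f5: "fact (i + Suc (Suc k)) = (x+y+2) * ((x+y+1) * (F::complex))"
    using f2 by simp
  show ?case unfolding e f1 f2 f3 f4 f5 using alg unfolding A_def by (simp only: mult.commute)
qed

lemma inner:
  assumes "i \<le> m"
  shows "(\<Sum>j=i..m. (-1)^(j-i) * of_nat (j choose i) * of_nat ((m+1) choose j) * (harm (m+1) - harm j))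
         = (1::complex) / of_nat (m - i + 1)"
proof -
  define n where "n = m - i"
  have mi: "m = n + i" and m1: "m + 1 - i = Suc n" and m2: "i + Suc n = m + 1"
    using assms unfolding n_def by auto
  define H :: complex where "H = harm (m+1)"
  have "(\<Sum>j=i..m. (-1)^(j-i) * of_nat (j choose i) * of_nat ((m+1) choose j) * (H - harm j))
      = (\<Sum>t\<le>n. (-1)^t * of_nat ((i+t) choose i) * of_nat ((m+1) choose (i+t)) * (H - harm (i+t)))"
    by (rule sum.reindex_bij_witness[where i="\<lambda>t. i + t" and j="\<lambda>j. j - i"]) (auto simp: mi)
  also have "\<dots> = (\<Sum>t\<le>Suc n. (-1)^t * of_nat ((i+t) choose i) * of_nat ((m+1) choose (i+t)) * (H - harm (i+t)))"
    using m2 by (simp add: H_def)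
  also have "\<dots> = (\<Sum>t\<le>Suc n. of_nat ((m+1) choose i) * ((-1)^t * of_nat (Suc n choose t) * (H - harm (i+t))))"
  proof (rule sum.cong[OF refl])
    fix t assume "t \<in> {..Suc n}"
    then have "i \<le> i + t" "i + t \<le> m + 1" using m2 by auto
    from choose_mult[OF this] m1
    have "((m+1) choose (i+t)) * ((i+t) choose i) = ((m+1) choose i) * (Suc n choose t)" by simp
    then have "(of_nat ((m+1) choose (i+t)) * of_nat ((i+t) choose i) :: complex)
               = of_nat ((m+1) choose i) * of_nat (Suc n choose t)"
      by (metis of_nat_mult)
    then show "(-1)^t * of_nat ((i+t) choose i) * of_nat ((m+1) choose (i+t)) * (H - harm (i+t))
        = of_nat ((m+1) choose i) * ((-1)^t * of_nat (Suc n choose t) * (H - harm (i+t)) :: complex)"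
      by (simp add: algebra_simps)
  qed
  also have "\<dots> = of_nat ((m+1) choose i) * (H * (\<Sum>t\<le>Suc n. (-1)^t * of_nat (Suc n choose t))
        - (\<Sum>t\<le>Suc n. (-1)^t * of_nat (Suc n choose t) * harm (i+t)))"
  proof -
    have "(\<Sum>t\<le>Suc n. (-1)^t * of_nat (Suc n choose t) * (H - harm (i+t)))
       = H * (\<Sum>t\<le>Suc n. (-1)^t * of_nat (Suc n choose t))
        - (\<Sum>t\<le>Suc n. (-1)^t * of_nat (Suc n choose t) * harm (i+t))"
      by (simp add: right_diff_distrib sum_subtractf sum_distrib_left mult_ac)
    then show ?thesis by (simp add: sum_distrib_left[symmetric])
  qed
  also have "\<dots> = of_nat ((m+1) choose i) * (fact i * fact n / fact (m+1))"
  proof -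
    have a1: "(\<Sum>t\<le>Suc n. (-1)^t * of_nat (Suc n choose t)) = (0::complex)"
      by (rule choose_alternating_sum) simp
    note a2 = altA[of n i, unfolded m2]
    show ?thesis by (simp only: a1 a2) simp
  qed
  also have "\<dots> = (fact (m+1) / (fact i * fact (Suc n))) * (fact i * fact n / fact (m+1))"
    using binomial_fact[of i "m+1", where 'a=complex] assms m1 by simp
  also have "\<dots> = fact n / fact (Suc n)"
    by (simp add: field_simps del: fact_Suc)
  also have "\<dots> = 1 / of_nat (m - i + 1)"
    using m1 assms by (simp add: fact_Suc field_simps del: of_nat_Suc)
  finally show ?thesis unfolding H_def .
qed

theorem proposition4:
  fixes m :: nat and \<alpha> :: complex
  assumes "m \<ge> 1" and "\<alpha> \<noteq> 0"
  shows "(\<Sum>k=1..m. cpow_nat k \<alpha> / of_nat (m - k + 1)) =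
         (\<Sum>j=1..m. of_nat (fact j) * stirling_fun \<alpha> j * of_nat ((m + 1) choose j)
                      * (harm (m + 1) - harm j))"
proof -
  define H :: complex where "H = harm (m+1)"
  have "(\<Sum>j=1..m. of_nat (fact j) * stirling_fun \<alpha> j * of_nat ((m + 1) choose j) * (H - harm j))
     = (\<Sum>j=1..m. (\<Sum>i | i \<in> {1..m} \<and> i \<le> j. (-1)^(j-i) * of_nat (j choose i) * of_nat ((m + 1) choose j) * (H - harm j) * cpow_nat i \<alpha>))"
  proof (rule sum.cong[OF refl])
    fix j assume "j \<in> {1..m}"
    then have e: "{i. i \<in> {1..m} \<and> i \<le> j} = {1..j}" by auto
    have "fact j \<noteq> (0::complex)" by simp
    then show "of_nat (fact j) * stirling_fun \<alpha> j * of_nat ((m + 1) choose j) * (H - harm j)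
       = (\<Sum>i | i \<in> {1..m} \<and> i \<le> j. (-1)^(j-i) * of_nat (j choose i) * of_nat ((m + 1) choose j) * (H - harm j) * cpow_nat i \<alpha>)"
      unfolding e stirling_fun_def
      by (simp add: sum_distrib_left sum_distrib_right algebra_simps)
  qed
  also have "\<dots> = (\<Sum>i=1..m. (\<Sum>j | j \<in> {1..m} \<and> j \<ge> i. (-1)^(j-i) * of_nat (j choose i) * of_nat ((m + 1) choose j) * (H - harm j) * cpow_nat i \<alpha>))"
    by (rule sum.swap_restrict) auto
  also have "\<dots> = (\<Sum>i=1..m. cpow_nat i \<alpha> / of_nat (m - i + 1))"
  proof (rule sum.cong[OF refl])
    fix i assume i: "i \<in> {1..m}"
    then have e: "{j. j \<in> {1..m} \<and> j \<ge> i} = {i..m}" by auto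
    show "(\<Sum>j | j \<in> {1..m} \<and> j \<ge> i. (-1)^(j-i) * of_nat (j choose i) * of_nat ((m + 1) choose j) * (H - harm j) * cpow_nat i \<alpha>)
        = cpow_nat i \<alpha> / of_nat (m - i + 1)"
      unfolding e using inner[of i m] i
      by (simp add: H_def sum_distrib_right[symmetric])
  qed
  finally show ?thesis unfolding H_def by simp
qed

end
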